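(* Let $T:X\to Y$ be a linear operator between Archimedean vector lattices. Then $T$ satisfies condition $(\beta)$ if and only if $T$ satisfies condition $(\beta_0)$.
   Context: All vector lattices are Archimedean. For a subset $A$ of a vector lattice $X$, $A^d=\{x\in X: |x|\wedge|a|=0 \text{ for all } a\in A\}$ and $A^{dd}=(A^d)^d$. For $a,b\in X$ we write $a\lhd b$ if $\{a\}^{dd}\subseteq\{b\}^{dd}$; $a$ and $b$ are of the same width if $\{a\}^{dd}=\{b\}^{dd}$. A linear operator $T$ satisfies condition $(\beta)$ if $Ta\lhd Tb$ whenever $a\lhd b$. It satisfies condition $(\beta_0)$ if whenever $a,b\in X$ are of the same width, $Ta$ and $Tb$ are of the same width in $Y$. *)

theory Defs
  imports "HOL-Analysis.Analysis"
begin

text \<open>Vector lattices (Riesz spaces) are modelled by types of class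
  ordered_real_vector that are also lattices.\<close>

definition vabs :: "'a::{ordered_real_vector, lattice} \<Rightarrow> 'a" where
  "vabs x = sup x (- x)"

definition vl_archimedean :: "'a::{ordered_real_vector, lattice} itself \<Rightarrow> bool" where
  "vl_archimedean _ \<longleftrightarrow>
     (\<forall>x y :: 'a. 0 \<le> x \<and> (\<forall>n::nat. real n *\<^sub>R x \<le> y) \<longrightarrow> x = 0)"

definition disj_compl :: "'a::{ordered_real_vector, lattice} set \<Rightarrow> 'a set" where
  "disj_compl A = {x. \<forall>a\<in>A. inf (vabs x) (vabs a) = 0}"

definition bidisj :: "'a::{ordered_real_vector, lattice} set \<Rightarrow> 'a set" where
  "bidisj A = disj_compl (disj_compl A)"

definition dlhd :: "'a::{ordered_real_vector, lattice} \<Rightarrow> 'a \<Rightarrow> bool" where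
  "dlhd a b \<longleftrightarrow> bidisj {a} \<subseteq> bidisj {b}"

definition same_width :: "'a::{ordered_real_vector, lattice} \<Rightarrow> 'a \<Rightarrow> bool" where
  "same_width a b \<longleftrightarrow> bidisj {a} = bidisj {b}"

definition cond_beta ::
  "('a::{ordered_real_vector, lattice} \<Rightarrow> 'b::{ordered_real_vector, lattice}) \<Rightarrow> bool" where
  "cond_beta T \<longleftrightarrow> (\<forall>a b. dlhd a b \<longrightarrow> dlhd (T a) (T b))"

definition cond_beta0 ::
  "('a::{ordered_real_vector, lattice} \<Rightarrow> 'b::{ordered_real_vector, lattice}) \<Rightarrow> bool" where
  "cond_beta0 T \<longleftrightarrow> (\<forall>a b. same_width a b \<longrightarrow> same_width (T a) (T b))"

end

theory Submission
  imports Defs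
begin

lemma add_inf_l:
  fixes a b c :: "'a::{ordered_real_vector, lattice}"
  shows "a + inf b c = inf (a+b) (a+c)"
proof (rule order.antisym)
  show "a + inf b c \<le> inf (a+b) (a+c)" by (simp add: add_left_mono)
  have "- a + inf (a+b) (a+c) \<le> inf b c"
  proof (rule inf_greatest)
    have "- a + inf (a+b) (a+c) \<le> - a + (a+b)" by (intro add_left_mono inf_le1)
    then show "- a + inf (a+b) (a+c) \<le> b" by (simp add: add.assoc[symmetric])
    have "- a + inf (a+b) (a+c) \<le> - a + (a+c)" by (intro add_left_mono inf_le2)
    then show "- a + inf (a+b) (a+c) \<le> c" by (simp add: add.assoc[symmetric])
  qed
  then have "a + (- a + inf (a+b) (a+c)) \<le> a + inf b c" by (rule add_left_mono)
  then show "inf (a+b) (a+c) \<le> a + inf b c" by (simp add: add.assoc[symmetric])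
qed

lemma vabs_nonneg:
  fixes x :: "'a::{ordered_real_vector, lattice}"
  shows "0 \<le> vabs x"
proof -
  have "x + - x \<le> vabs x + vabs x" unfolding vabs_def by (intro add_mono) auto
  then have "0 \<le> vabs x + vabs x" by simp
  then have "0 \<le> (1/2::real) *\<^sub>R (vabs x + vabs x)" by (intro scaleR_nonneg_nonneg) auto
  also have "(1/2::real) *\<^sub>R (vabs x + vabs x) = ((1/2 + 1/2)::real) *\<^sub>R vabs x"
    by (simp only: scaleR_add_right scaleR_add_left)
  also have "\<dots> = vabs x" by simp
  finally show ?thesis .
qed

lemma vabs_pos:
  fixes x :: "'a::{ordered_real_vector, lattice}"
  assumes "0 \<le> x" shows "vabs x = x"
  unfolding vabs_def using assms by (simp add: sup_absorb1 order_trans[of "-x" 0 x])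

lemma vabs_diff:
  fixes x y :: "'a::{ordered_real_vector, lattice}"
  shows "vabs (x - y) \<le> vabs x + vabs y"
  unfolding vabs_def
proof (rule sup_least)
  show "x - y \<le> sup x (- x) + sup y (- y)"
    using add_mono[of x "sup x (-x)" "-y" "sup y (-y)"] by simp
  show "- (x - y) \<le> sup x (- x) + sup y (- y)"
    using add_mono[of "-x" "sup x (-x)" "y" "sup y (-y)"] by simp
qed

lemma inf_add_le:
  fixes p q u :: "'a::{ordered_real_vector, lattice}"
  assumes "0 \<le> p" "0 \<le> q" "0 \<le> u"
  shows "inf u (p + q) \<le> inf u p + inf u q"
proof -
  have "inf u p + inf u q = inf (inf u p + u) (inf u p + q)"
    using add_inf_l[of "inf u p" u q] by simp
  also have "inf u p + u = inf (u+u) (p+u)" using add_inf_l[of u u p] by (simp add: add.commute)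
  also have "inf u p + q = inf (u+q) (p+q)" using add_inf_l[of q u p] by (simp add: add.commute)
  finally have e: "inf u p + inf u q = inf (inf (u+u) (p+u)) (inf (u+q) (p+q))" .
  have "inf u (p+q) \<le> inf (inf (u+u) (p+u)) (inf (u+q) (p+q))"
  proof (intro inf_greatest)
    show "inf u (p+q) \<le> u+u" using assms by (meson add_increasing2 inf_le1 order.trans order.refl)
    show "inf u (p+q) \<le> p+u" using assms by (meson add_increasing inf_le1 order.trans order.refl)
    show "inf u (p+q) \<le> u+q" using assms by (meson add_increasing2 inf_le1 order.trans order.refl)
    show "inf u (p+q) \<le> p+q" by simp
  qed
  then show ?thesis using e by simp
qed

lemma disj_add:
  fixes p q u :: "'a::{ordered_real_vector, lattice}"
  assumes "0 \<le> p" "0 \<le> q" "0 \<le> u" "inf u p = 0" "inf u q = 0"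
  shows "inf u (p + q) = 0"
proof (rule order.antisym)
  show "inf u (p + q) \<le> 0" using inf_add_le[OF assms(1-3)] assms(4,5) by simp
  show "0 \<le> inf u (p + q)" using assms(1-3) by (simp add: add_nonneg_nonneg)
qed

lemma disj_mono:
  fixes v w u :: "'a::{ordered_real_vector, lattice}"
  assumes "0 \<le> v" "v \<le> w" "0 \<le> u" "inf u w = 0"
  shows "inf u v = 0"
proof (rule order.antisym)
  have "inf u v \<le> inf u w" by (rule inf_mono) (simp_all add: assms)
  then show "inf u v \<le> 0" using assms by simp
  show "0 \<le> inf u v" using assms by simp
qed

lemma D_anti: "A \<subseteq> B \<Longrightarrow> disj_compl B \<subseteq> disj_compl A"
  unfolding disj_compl_def by auto

lemma D_ext: "A \<subseteq> disj_compl (disj_compl A)"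
  unfolding disj_compl_def by (auto simp: inf_commute)

lemma D3: "disj_compl (disj_compl (disj_compl A)) = disj_compl A"
  by (rule order.antisym) (rule D_anti[OF D_ext], rule D_ext)

lemma bidisj_sub:
  assumes "z \<in> bidisj {w}" shows "bidisj {z} \<subseteq> bidisj {w}"
proof -
  have "disj_compl (disj_compl (disj_compl {w})) \<subseteq> disj_compl {z}"
    using assms unfolding bidisj_def by (intro D_anti) auto
  then have "disj_compl {w} \<subseteq> disj_compl {z}" by (simp add: D3)
  then show ?thesis unfolding bidisj_def by (rule D_anti)
qed

lemma same_width_D:
  assumes "same_width x y" shows "disj_compl {x} = disj_compl {y}"
proof -
  have "disj_compl (bidisj {x}) = disj_compl (bidisj {y})" using assms unfolding same_width_def by simp
  then show ?thesis unfolding bidisj_def D3 .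
qed

lemma D_eq_same_width:
  assumes "disj_compl {x} = disj_compl {y}" shows "same_width x y"
  using assms unfolding same_width_def bidisj_def by simp

lemma dlhd_D:
  assumes "dlhd a b" shows "disj_compl {b} \<subseteq> disj_compl {a}"
proof -
  have "disj_compl (bidisj {b}) \<subseteq> disj_compl (bidisj {a})" using assms unfolding dlhd_def by (rule D_anti)
  then show ?thesis unfolding bidisj_def D3 .
qed

lemma key:
  fixes a b :: "'a::{ordered_real_vector, lattice}"
  assumes "dlhd a b"
  shows "same_width (vabs a + vabs b) b" "same_width (a + (vabs a + vabs b)) b"
proof -
  have Dba: "disj_compl {b} \<subseteq> disj_compl {a}" by (rule dlhd_D[OF assms])
  have na: "0 \<le> vabs a" and nb: "0 \<le> vabs b" by (rule vabs_nonneg)+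
  have x1: "0 \<le> vabs a + vabs b" using na nb by simp
  have x2: "vabs b \<le> a + (vabs a + vabs b)"
  proof -
    have "-a \<le> vabs a" unfolding vabs_def by simp
    then have "a + - a \<le> a + vabs a" by (rule add_left_mono)
    then have "0 \<le> a + vabs a" by simp
    then have "0 + vabs b \<le> (a + vabs a) + vabs b" by (rule add_right_mono)
    then show ?thesis by (simp add: add.assoc)
  qed
  have x2': "a + (vabs a + vabs b) \<le> vabs a + (vabs a + vabs b)"
    by (intro add_right_mono) (simp add: vabs_def)
  have x2p: "0 \<le> a + (vabs a + vabs b)" using nb x2 by (rule order.trans)
  have bD: "z \<in> disj_compl {b} \<Longrightarrow> inf (vabs z) (vabs a) = 0 \<and> inf (vabs z) (vabs b) = 0" for z
    using Dba unfolding disj_compl_def by auto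
  show "same_width (vabs a + vabs b) b"
  proof (rule D_eq_same_width, rule set_eqI)
    fix z
    show "z \<in> disj_compl {vabs a + vabs b} \<longleftrightarrow> z \<in> disj_compl {b}"
    proof
      assume "z \<in> disj_compl {vabs a + vabs b}"
      then have "inf (vabs z) (vabs a + vabs b) = 0" unfolding disj_compl_def using vabs_pos[OF x1] by simp
      then have "inf (vabs z) (vabs b) = 0"
        using disj_mono[OF nb _ vabs_nonneg, of "vabs a + vabs b" z] na by (simp add: add_increasing)
      then show "z \<in> disj_compl {b}" unfolding disj_compl_def by simp
    next
      assume "z \<in> disj_compl {b}"
      then have "inf (vabs z) (vabs a + vabs b) = 0"
        using bD by (intro disj_add na nb vabs_nonneg) auto
      then show "z \<in> disj_compl {vabs a + vabs b}" unfolding disj_compl_def using vabs_pos[OF x1] by simp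
    qed
  qed
  show "same_width (a + (vabs a + vabs b)) b"
  proof (rule D_eq_same_width, rule set_eqI)
    fix z
    show "z \<in> disj_compl {a + (vabs a + vabs b)} \<longleftrightarrow> z \<in> disj_compl {b}"
    proof
      assume "z \<in> disj_compl {a + (vabs a + vabs b)}"
      then have "inf (vabs z) (a + (vabs a + vabs b)) = 0" unfolding disj_compl_def using vabs_pos[OF x2p] by simp
      then have "inf (vabs z) (vabs b) = 0"
        by (rule disj_mono[OF nb x2 vabs_nonneg])
      then show "z \<in> disj_compl {b}" unfolding disj_compl_def by simp
    next
      assume "z \<in> disj_compl {b}"
      then have "inf (vabs z) (vabs a + (vabs a + vabs b)) = 0"
        using bD by (intro disj_add disj_add na nb x1 vabs_nonneg) auto
      then have "inf (vabs z) (a + (vabs a + vabs b)) = 0"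
        by (rule disj_mono[OF x2p x2' vabs_nonneg])
      then show "z \<in> disj_compl {a + (vabs a + vabs b)}" unfolding disj_compl_def using vabs_pos[OF x2p] by simp
    qed
  qed
qed

lemma diff_in_bidisj:
  fixes p q w :: "'b::{ordered_real_vector, lattice}"
  assumes "same_width p w" "same_width q w"
  shows "dlhd (p - q) w"
proof -
  have Dp: "disj_compl {p} = disj_compl {w}" and Dq: "disj_compl {q} = disj_compl {w}"
    using same_width_D assms by auto
  have "p - q \<in> bidisj {w}"
    unfolding bidisj_def disj_compl_def[of "disj_compl {w}"]
  proof (safe)
    fix u assume u: "u \<in> disj_compl {w}"
    then have "inf (vabs u) (vabs p) = 0" "inf (vabs u) (vabs q) = 0"
      using Dp Dq unfolding disj_compl_def by auto
    then have "inf (vabs u) (vabs p + vabs q) = 0"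
      by (intro disj_add vabs_nonneg)
    then have "inf (vabs u) (vabs (p - q)) = 0"
      by (rule disj_mono[OF vabs_nonneg vabs_diff vabs_nonneg])
    then show "inf (vabs (p - q)) (vabs u) = 0" by (simp add: inf_commute)
  qed
  then show ?thesis unfolding dlhd_def by (rule bidisj_sub)
qed

theorem theorem4p2:
  fixes T :: "'a::{ordered_real_vector, lattice} \<Rightarrow> 'b::{ordered_real_vector, lattice}"
  assumes "vl_archimedean TYPE('a)" and "vl_archimedean TYPE('b)"
    and "linear T"
  shows "cond_beta T \<longleftrightarrow> cond_beta0 T"
proof
  assume "cond_beta T"
  then show "cond_beta0 T"
    unfolding cond_beta_def cond_beta0_def same_width_def dlhd_def by blast
next
  assume b0: "cond_beta0 T"
  show "cond_beta T" unfolding cond_beta_def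
  proof (intro allI impI)
    fix a b :: 'a assume ab: "dlhd a b"
    define x1 where "x1 = vabs a + vabs b"
    have s1: "same_width (T x1) (T b)" using b0 key(1)[OF ab] unfolding cond_beta0_def x1_def by blast
    have s2: "same_width (T (a + x1)) (T b)" using b0 key(2)[OF ab] unfolding cond_beta0_def x1_def by blast
    have "T (a + x1) - T x1 = T a" using linear_add[OF assms(3)] by simp
    then show "dlhd (T a) (T b)" using diff_in_bidisj[OF s2 s1] by simp
  qed
qed

end
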